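(* Let $n\geq 2$, let $G$ be a group, and let $\mathbb{F}_n$ be the free group on $e_1,\dots,e_n$. Let $h:\mathbb{F}_n\to G$ be a map satisfying $h(x^{-1})=h(x)^{-1}$ and $h(xy)=h(y)h(x)$ for all $x,y\in\mathbb{F}_n$. Then for every braid $\beta\in\mathcal{B}_n$, $$h\big(\beta\bullet(e_1,\dots,e_n)\big)=\beta^{-1}\bullet\big(h(e_1),\dots,h(e_n)\big),$$ where for $(f_1,\dots,f_n)\in\mathbb{F}_n^n$ we write $h(f_1,\dots,f_n)=(h(f_1),\dots,h(f_n))$.
   Context: The braid group $\mathcal{B}_n$ is the group with generators $\beta_1,\dots,\beta_{n-1}$ and relations $\beta_i\beta_j\beta_i=\beta_j\beta_i\beta_j$ if $|i-j|=1$, $\beta_i\beta_j=\beta_j\beta_i$ if $|i-j|>1$. It acts on $\mathbb{F}_n$ by automorphisms $a_\beta$ determined by $a_{\beta_i}(e_i)=e_{i+1}$, $a_{\beta_i}(e_{i+1})=e_{i+1}e_ie_{i+1}^{-1}$, $a_{\beta_i}(e_j)=e_j$ for $j\notin\{i,i+1\}$; and $\beta\bullet(e_1,\dots,e_n)=(a_\beta(e_1),\dots,a_\beta(e_n))$. The braid group also acts (on the left) on $G^n$, the action being determined on generators by $\beta_i\bullet(x_1,\dots,x_{i-1},x_i,x_{i+1},x_{i+2},\dots,x_n)=(x_1,\dots,x_{i-1},x_ix_{i+1}x_i^{-1},x_i,x_{i+2},\dots,x_n)$. *)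

theory Defs
  imports "HOL-Algebra.Group"
begin

text \<open>A letter (False, j) stands for e_j, (True, j) for e_j^-1.\<close>
type_synonym fword = "(bool \<times> nat) list"

fun red :: "fword \<Rightarrow> fword" where
  "red [] = []"
| "red (x # xs) = (case red xs of
      [] \<Rightarrow> [x]
    | y # ys \<Rightarrow> (if fst x \<noteq> fst y \<and> snd x = snd y then ys else x # y # ys))"

definition winv :: "fword \<Rightarrow> fword" where
  "winv w = rev (map (\<lambda>(b, j). (\<not> b, j)) w)"

definition free_group :: "nat \<Rightarrow> fword monoid" where
  "free_group n = \<lparr> carrier = {w. red w = w \<and> (\<forall>x\<in>set w. snd x \<in> {1..n})},
                    mult = (\<lambda>u v. red (u @ v)),
                    one = [] \<rparr>"

definition gen :: "nat \<Rightarrow> fword" where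
  "gen j = [(False, j)]"

definition subst :: "(nat \<Rightarrow> fword) \<Rightarrow> fword \<Rightarrow> fword" where
  "subst \<sigma> w = red (concat (map (\<lambda>(b, j). if b then winv (\<sigma> j) else \<sigma> j) w))"

text \<open>A braid word is a list of letters; (False, i) stands for beta_i, (True, i) for beta_i^-1.\<close>
type_synonym bword = "(bool \<times> nat) list"

definition braid_inv :: "bword \<Rightarrow> bword" where
  "braid_inv w = rev (map (\<lambda>(b, i). (\<not> b, i)) w)"

definition gen_aut :: "bool \<times> nat \<Rightarrow> nat \<Rightarrow> fword" where
  "gen_aut g j = (case g of
      (False, i) \<Rightarrow> (if j = i then gen (i + 1)
                     else if j = i + 1 then [(False, i + 1), (False, i), (True, i + 1)]
                     else gen j)
    | (True, i) \<Rightarrow> (if j = i then [(True, i), (False, i + 1), (False, i)]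
                     else if j = i + 1 then gen i
                     else gen j))"

fun braid_aut :: "bword \<Rightarrow> nat \<Rightarrow> fword" where
  "braid_aut [] j = gen j"
| "braid_aut (g # \<gamma>) j = subst (gen_aut g) (braid_aut \<gamma> j)"

text \<open>Left action on G^n (tuples indexed by 1..n).\<close>
definition gen_act :: "('g, 'b) monoid_scheme \<Rightarrow> bool \<times> nat \<Rightarrow> (nat \<Rightarrow> 'g) \<Rightarrow> (nat \<Rightarrow> 'g)" where
  "gen_act G g x = (case g of
      (False, i) \<Rightarrow> x(i := x i \<otimes>\<^bsub>G\<^esub> x (i + 1) \<otimes>\<^bsub>G\<^esub> inv\<^bsub>G\<^esub> (x i), i + 1 := x i)
    | (True, i) \<Rightarrow> x(i := x (i + 1),
                     i + 1 := inv\<^bsub>G\<^esub> (x (i + 1)) \<otimes>\<^bsub>G\<^esub> x i \<otimes>\<^bsub>G\<^esub> x (i + 1)))"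

fun braid_act :: "('g, 'b) monoid_scheme \<Rightarrow> bword \<Rightarrow> (nat \<Rightarrow> 'g) \<Rightarrow> (nat \<Rightarrow> 'g)" where
  "braid_act G [] x = x"
| "braid_act G (g # \<gamma>) x = gen_act G g (braid_act G \<gamma> x)"

end

theory Submission
  imports Defs
begin

definition lt :: "('g, 'b) monoid_scheme \<Rightarrow> (nat \<Rightarrow> 'g) \<Rightarrow> bool \<times> nat \<Rightarrow> 'g" where
  "lt G x a = (if fst a then inv\<^bsub>G\<^esub> (x (snd a)) else x (snd a))"

fun ev :: "('g, 'b) monoid_scheme \<Rightarrow> (nat \<Rightarrow> 'g) \<Rightarrow> fword \<Rightarrow> 'g" where
  "ev G x [] = \<one>\<^bsub>G\<^esub>"
| "ev G x (a # w) = ev G x w \<otimes>\<^bsub>G\<^esub> lt G x a"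

fun rd :: "fword \<Rightarrow> bool" where
  "rd [] = True"
| "rd [a] = True"
| "rd (a # b # w) = (\<not> (fst a \<noteq> fst b \<and> snd a = snd b) \<and> rd (b # w))"

lemma rd_tl: "rd (a # w) \<Longrightarrow> rd w"
  by (cases w) auto

lemma rd_red: "rd (red w)"
proof (induction w)
  case Nil then show ?case by simp
next
  case (Cons a w)
  then show ?case
    by (cases "red w") (auto dest: rd_tl)
qed

lemma red_rd: "rd w \<Longrightarrow> red w = w"
proof (induction w rule: rd.induct)
  case (3 a b w)
  then show ?case by auto
qed auto

lemma red_red: "red (red w) = red w"
  using red_rd rd_red by blast

lemma set_red: "set (red w) \<subseteq> set w"
proof (induction w)
  case (Cons a w)
  then show ?case by (cases "red w") auto
qed simp

definition inr :: "nat \<Rightarrow> fword \<Rightarrow> bool" where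
  "inr n w = (\<forall>a\<in>set w. snd a \<in> {1..n})"

lemma inr_winv: "inr n (winv w) = inr n w"
  by (auto simp: inr_def winv_def)

lemma inr_subst:
  assumes "\<forall>k\<in>{1..n}. inr n (\<sigma> k)" "inr n w"
  shows "inr n (subst \<sigma> w)"
proof -
  have "inr n (concat (map (\<lambda>(b, j). if b then winv (\<sigma> j) else \<sigma> j) w))"
    unfolding inr_def
  proof
    fix a assume "a \<in> set (concat (map (\<lambda>(b, j). if b then winv (\<sigma> j) else \<sigma> j) w))"
    then obtain b j where bj: "(b,j) \<in> set w" "a \<in> set (if b then winv (\<sigma> j) else \<sigma> j)" by auto
    then have "j \<in> {1..n}" using assms(2) by (auto simp: inr_def)
    then have "inr n (\<sigma> j)" "inr n (winv (\<sigma> j))" using assms(1) inr_winv by auto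
    then show "snd a \<in> {1..n}" using bj(2) by (cases b) (auto simp: inr_def)
  qed
  then show ?thesis unfolding subst_def inr_def using set_red by blast
qed

lemma braid_act_append:
  "braid_act G (u @ v) x = braid_act G u (braid_act G v x)"
  by (induction u) auto

lemma braid_inv_cons: "braid_inv (g # \<gamma>) = braid_inv \<gamma> @ [(\<not> fst g, snd g)]"
  by (cases g) (simp add: braid_inv_def)

lemma braid_act_agree:
  assumes "\<forall>(b, i)\<in>set \<beta>. 1 \<le> i \<and> i < n" "\<forall>k\<in>{1..n}. x k = y k"
  shows "\<forall>k\<in>{1..n}. braid_act G \<beta> x k = braid_act G \<beta> y k"
  using assms
proof (induction \<beta>)
  case Nil then show ?case by simp
next
  case (Cons g \<beta>)
  obtain b i where g: "g = (b, i)" by force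
  have r: "1 \<le> i" "i < n" using Cons.prems g by auto
  have IH: "\<forall>k\<in>{1..n}. braid_act G \<beta> x k = braid_act G \<beta> y k" using Cons by auto
  have a: "braid_act G \<beta> x i = braid_act G \<beta> y i" "braid_act G \<beta> x (i+1) = braid_act G \<beta> y (i+1)"
    using IH r by auto
  show ?case using IH a by (auto simp: g gen_act_def split: bool.splits)
qed

context group begin

lemma lt_carrier: "\<forall>k. x k \<in> carrier G \<Longrightarrow> lt G x a \<in> carrier G"
  by (simp add: lt_def)

lemma ev_carrier: "\<forall>k. x k \<in> carrier G \<Longrightarrow> ev G x w \<in> carrier G"
  by (induction w) (auto simp: lt_carrier)

lemma ev_append: "\<forall>k. x k \<in> carrier G \<Longrightarrow> ev G x (u @ v) = ev G x v \<otimes> ev G x u"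
  by (induction u) (auto simp: ev_carrier lt_carrier m_assoc)

lemma ev_red: assumes "\<forall>k. x k \<in> carrier G" shows "ev G x (red w) = ev G x w"
proof (induction w)
  case Nil then show ?case by simp
next
  case (Cons a w)
  show ?case
  proof (cases "red w")
    case Nil
    then show ?thesis using Cons assms by (simp add: lt_carrier)
  next
    case (Cons y ys)
    note C = Cons
    show ?thesis
    proof (cases "fst a \<noteq> fst y \<and> snd a = snd y")
      case True
      have "lt G x y \<otimes> lt G x a = \<one>"
        using True assms by (cases "fst a") (auto simp: lt_def)
      moreover have "ev G x w = ev G x ys \<otimes> lt G x y"
        using Cons.IH C by simp
      ultimately show ?thesis using C True assms
        by (simp add: m_assoc ev_carrier lt_carrier)
    next
      case False
      then show ?thesis using C Cons.IH by auto
    qed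
  qed
qed

lemma ev_winv: assumes "\<forall>k. x k \<in> carrier G" shows "ev G x (winv w) = inv (ev G x w)"
proof (induction w)
  case Nil then show ?case by (simp add: winv_def)
next
  case (Cons a w)
  have "winv (a # w) = winv w @ [(\<not> fst a, snd a)]"
    by (cases a) (simp add: winv_def)
  then show ?case using Cons assms
    by (simp add: ev_append lt_def inv_mult_group ev_carrier)
qed

lemma ev_subst:
  assumes "\<forall>k. x k \<in> carrier G"
  shows "ev G x (subst \<sigma> w) = ev G (\<lambda>k. ev G x (\<sigma> k)) w"
proof -
  have "ev G x (concat (map (\<lambda>(b, j). if b then winv (\<sigma> j) else \<sigma> j) w)) = ev G (\<lambda>k. ev G x (\<sigma> k)) w"
    by (induction w) (auto simp: ev_append assms ev_winv lt_def)
  then show ?thesis unfolding subst_def using ev_red assms by simp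
qed

lemma ev_gen_aut:
  assumes "\<forall>k. x k \<in> carrier G"
  shows "ev G x (gen_aut g k) = gen_act G (\<not> fst g, snd g) x k"
  using assms
  by (cases g) (auto simp: gen_aut_def gen_act_def gen_def lt_def m_assoc split: bool.splits)

lemma ev_braid:
  assumes "\<forall>k. x k \<in> carrier G"
  shows "ev G x (braid_aut \<beta> j) = braid_act G (braid_inv \<beta>) x j"
  using assms
proof (induction \<beta> arbitrary: x)
  case Nil then show ?case by (simp add: gen_def lt_def braid_inv_def)
next
  case (Cons g \<gamma>)
  have e: "(\<lambda>k. ev G x (gen_aut g k)) = gen_act G (\<not> fst g, snd g) x"
    using ev_gen_aut Cons.prems by auto
  have c: "\<forall>k. gen_act G (\<not> fst g, snd g) x k \<in> carrier G"
    using Cons.prems e ev_carrier by metis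
  show ?case using Cons.IH[OF c] Cons.prems
    by (simp add: ev_subst e braid_inv_cons braid_act_append)
qed

end

theorem lemma6p4:
  fixes G :: "('g, 'b) monoid_scheme" and n :: nat and h :: "fword \<Rightarrow> 'g" and \<beta> :: bword
  assumes "n \<ge> 2"
    and "group G"
    and "h \<in> carrier (free_group n) \<rightarrow> carrier G"
    and "\<forall>x\<in>carrier (free_group n). h (winv x) = inv\<^bsub>G\<^esub> (h x)"
    and "\<forall>x\<in>carrier (free_group n). \<forall>y\<in>carrier (free_group n).
           h (x \<otimes>\<^bsub>free_group n\<^esub> y) = h y \<otimes>\<^bsub>G\<^esub> h x"
    and "\<forall>(b, i)\<in>set \<beta>. 1 \<le> i \<and> i < n"
  shows "\<forall>j\<in>{1..n}. h (braid_aut \<beta> j) = braid_act G (braid_inv \<beta>) (\<lambda>k. h (gen k)) j"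
proof -
  interpret group G by fact
  let ?F = "free_group n"
  define y where "y = (\<lambda>k. if k \<in> {1..n} then h (gen k) else \<one>\<^bsub>G\<^esub>)"
  have carF: "w \<in> carrier ?F \<longleftrightarrow> red w = w \<and> inr n w" for w
    by (auto simp: free_group_def inr_def)
  have genF: "gen k \<in> carrier ?F" if "k \<in> {1..n}" for k
    using that by (simp add: carF gen_def inr_def)
  have yc: "\<forall>k. y k \<in> carrier G"
    using genF assms(3) by (auto simp: y_def)
  have nilF: "[] \<in> carrier ?F" by (simp add: carF inr_def)
  have hnil: "h [] = \<one>\<^bsub>G\<^esub>"
  proof -
    have "h [] \<in> carrier G" using nilF assms(3) by auto
    moreover have "h ([] \<otimes>\<^bsub>?F\<^esub> []) = h [] \<otimes>\<^bsub>G\<^esub> h []"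
      using assms(5) nilF by blast
    moreover have "[] \<otimes>\<^bsub>?F\<^esub> [] = []" by (simp add: free_group_def)
    ultimately show ?thesis by simp
  qed
  have hlt: "h [a] = lt G y a" if "snd a \<in> {1..n}" for a
  proof (cases "fst a")
    case True
    have "[a] = winv (gen (snd a))" using True by (cases a) (simp add: winv_def gen_def)
    then show ?thesis using True that assms(4) genF by (simp add: lt_def y_def)
  next
    case False
    have "[a] = gen (snd a)" using False by (cases a) (simp add: gen_def)
    then show ?thesis using False that by (simp add: lt_def y_def)
  qed
  have hev: "w \<in> carrier ?F \<Longrightarrow> h w = ev G y w" for w
  proof (induction w)
    case Nil then show ?case by (simp add: hnil)
  next
    case (Cons a w)
    have rd: "rd (a # w)" using Cons.prems carF rd_red by metis
    have wF: "w \<in> carrier ?F" using Cons.prems rd rd_tl red_rd by (auto simp: carF inr_def)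
    have aF: "[a] \<in> carrier ?F" using Cons.prems by (auto simp: carF inr_def)
    have "[a] \<otimes>\<^bsub>?F\<^esub> w = a # w" using Cons.prems by (simp add: free_group_def)
    moreover have "h ([a] \<otimes>\<^bsub>?F\<^esub> w) = h w \<otimes>\<^bsub>G\<^esub> h [a]" using assms(5) aF wF by blast
    ultimately have "h (a # w) = h w \<otimes>\<^bsub>G\<^esub> h [a]" by simp
    then show ?case using Cons.IH wF hlt Cons.prems by (simp add: carF inr_def)
  qed
  have gaF: "inr n (gen_aut g k)" if "1 \<le> snd g" "snd g < n" "k \<in> {1..n}" for g k
    using that by (cases g) (auto simp: gen_aut_def gen_def inr_def split: bool.splits)
  have bF: "\<forall>(b, i)\<in>set \<gamma>. 1 \<le> i \<and> i < n \<Longrightarrow> k \<in> {1..n} \<Longrightarrow> braid_aut \<gamma> k \<in> carrier ?F" for \<gamma> k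
  proof (induction \<gamma>)
    case Nil then show ?case using genF by simp
  next
    case (Cons g \<gamma>)
    have "1 \<le> snd g" "snd g < n" using Cons.prems by (cases g, auto)+
    then have "inr n (subst (gen_aut g) (braid_aut \<gamma> k))"
      using Cons gaF inr_subst carF by auto
    then show ?case by (simp add: carF subst_def red_red)
  qed
  have binv: "\<forall>(b, i)\<in>set (braid_inv \<beta>). 1 \<le> i \<and> i < n"
    using assms(6) by (auto simp: braid_inv_def)
  have agree: "\<forall>k\<in>{1..n}. braid_act G (braid_inv \<beta>) y k = braid_act G (braid_inv \<beta>) (\<lambda>k. h (gen k)) k"
    by (rule braid_act_agree[OF binv]) (simp add: y_def)
  show ?thesis
  proof
    fix j assume j: "j \<in> {1..n}"
    have "h (braid_aut \<beta> j) = ev G y (braid_aut \<beta> j)" using hev bF assms(6) j by blast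
    also have "\<dots> = braid_act G (braid_inv \<beta>) y j" using ev_braid[OF yc] by simp
    finally show "h (braid_aut \<beta> j) = braid_act G (braid_inv \<beta>) (\<lambda>k. h (gen k)) j"
      using agree j by simp
  qed
qed

end
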